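(* Let $q>2$ be prime, $p$ not a multiple of $q$, $a_n=e^{-i\pi p(n-1/2)^2/q}$ for integers $n$, and let $1\le j<(q+2)/4$, $\alpha=\alpha_j=q-2j+1$. For $1\le n\le\alpha$ let $\Omega(n,\alpha)$ be the set of $(r_1,\dots,r_n)$ of positive integers with $r_1+\dots+r_n=\alpha$, and set $l_s=r_1+\dots+r_s$. Define $$s_j=-i\,2^{-\alpha}\sum_{n=1}^{\alpha}(-1)^{n+j}\sum_{(r_1,\dots,r_n)\in\Omega(n,\alpha)}\frac{1}{r_1!\cdots r_n!}\;\frac{a_j\,a_{j+l_1}\cdots a_{j+l_{n-1}}}{(a_{j+l_1}-a_j)\cdots(a_{j+l_{n-1}}-a_j)}.$$ Then there are constants $C>0$, $\gamma>0$ such that, asymptotically as $q\to\infty$, $$|s_j|\lesssim C\,q^{1/2}e^{-\gamma q}\prod_{l=1}^{\alpha_j-1}\frac{1}{|a_{j+l}\overline{a_j}-1|}.$$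
   Context: For $j<(q+2)/4$ the indices $j+l$, $1\le l\le\alpha-1$, lie in $\{j+1,\dots,q-j\}$, so $a_{j+l}\ne a_j$ (since $a_r=a_s$ for $1\le r,s\le q$ iff $r=s$ or $r+s=q+1$). The quantity $s_j$ is the leading coefficient of the band-slope expansion for the $j$-th band at the resonance $\tau=2\pi p/q$, $\beta=1/2$. *)

theory Defs
  imports Complex_Main "HOL-Computational_Algebra.Primes"
begin

definition aseq :: "int \<Rightarrow> nat \<Rightarrow> int \<Rightarrow> complex" where
  "aseq p q n = exp (- \<i> * complex_of_real (pi * real_of_int p * (real_of_int n - 1/2)^2 / real q))"

definition Omega :: "nat \<Rightarrow> nat \<Rightarrow> nat list set" where
  "Omega n \<alpha> = {rs. length rs = n \<and> (\<forall>r\<in>set rs. 0 < r) \<and> sum_list rs = \<alpha>}"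

definition alpha :: "nat \<Rightarrow> nat \<Rightarrow> nat" where
  "alpha q j = q + 1 - 2 * j"

definition lsum :: "nat list \<Rightarrow> nat \<Rightarrow> nat" where
  "lsum rs s = sum_list (take s rs)"

definition s_coef :: "int \<Rightarrow> nat \<Rightarrow> nat \<Rightarrow> complex" where
  "s_coef p q j =
    (let \<alpha> = alpha q j; a = aseq p q in
     - \<i> * (1 / 2 ^ \<alpha>) *
     (\<Sum>n=1..\<alpha>. (-1) ^ (n + j) *
        (\<Sum>rs\<in>Omega n \<alpha>.
           (1 / of_nat (\<Prod>r\<leftarrow>rs. fact r)) *
           ((a (int j) * (\<Prod>s=1..n-1. a (int (j + lsum rs s)))) /
            (\<Prod>s=1..n-1. a (int (j + lsum rs s)) - a (int j))))))"

end

theory Submission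
  imports Defs
begin


lemma aseq_cis: "aseq p q n = cis (- (pi * real_of_int p * (real_of_int n - 1/2)^2 / real q))"
  unfolding aseq_def cis_conv_exp by (simp add: algebra_simps)

lemma norm_aseq [simp]: "cmod (aseq p q n) = 1"
  unfolding aseq_cis by simp

lemma aseq_neq:
  assumes q: "prime q" and pq: "\<not> int q dvd p" and l: "0 < l" and lj: "l + 2*j \<le> q" and j: "1 \<le> j"
  shows "aseq p q (int (j+l)) \<noteq> aseq p q (int j)"
proof
  assume eq: "aseq p q (int (j+l)) = aseq p q (int j)"
  define x where "x = - (pi * real_of_int p * (real (j+l) - 1/2)^2 / real q)"
  define y where "y = - (pi * real_of_int p * (real j - 1/2)^2 / real q)"
  have "cis x = cis y" using eq unfolding aseq_cis x_def y_def by simp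
  hence "sin x = sin y \<and> cos x = cos y" by (metis cis.sel)
  then obtain n :: int where n: "x = y + 2 * pi * n" using sin_cos_eq_iff by blast
  have q0: "real q > 0" using q prime_gt_0_nat by simp
  have "pi * (real_of_int p * ((real (j+l) - 1/2)^2 - (real j - 1/2)^2)) = pi * (- 2 * n * real q)"
    using n q0 unfolding x_def y_def by (simp add: field_simps)
  hence "real_of_int p * ((real (j+l) - 1/2)^2 - (real j - 1/2)^2) = - 2 * n * real q"
    by (rule mult_left_cancel[THEN iffD1, OF pi_neq_zero])
  hence "real_of_int (p * (int l * (2*int j + int l - 1))) = real_of_int (- 2 * n * int q)"
    by (simp add: algebra_simps power2_eq_square)
  hence "p * (int l * (2*int j + int l - 1)) = - 2 * n * int q" by (simp only: of_int_eq_iff)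
  hence dv: "int q dvd p * (int l * (2*int j + int l - 1))" by (metis dvd_triv_right mult.commute mult_minus_left dvd_minus_iff)
  have qi: "prime (int q)" using q by simp
  have "\<not> int q dvd int l" using l lj j by (intro zdvd_not_zless) auto
  moreover have "\<not> int q dvd (2*int j + int l - 1)" using l lj j by (intro zdvd_not_zless) auto
  ultimately show False using dv pq qi by (simp add: prime_dvd_mult_iff)
qed



lemma lists_set_Suc:
  "{xs. set xs \<subseteq> A \<and> length xs = Suc n} = (\<lambda>(x,xs). x # xs) ` (A \<times> {xs. set xs \<subseteq> A \<and> length xs = n})"
  by (auto simp: image_iff length_Suc_conv)

lemma sum_lists_power:
  fixes f :: "'a \<Rightarrow> real"
  assumes "finite A"
  shows "(\<Sum>xs\<in>{xs. set xs \<subseteq> A \<and> length xs = n}. prod_list (map f xs)) = (sum f A)^n"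
proof (induction n)
  case 0
  have "{xs. set xs \<subseteq> A \<and> length xs = 0} = {[]}" by auto
  then show ?case by simp
next
  case (Suc n)
  have inj: "inj_on (\<lambda>(x,xs). x # xs) (A \<times> {xs. set xs \<subseteq> A \<and> length xs = n})"
    by (auto simp: inj_on_def)
  have "(\<Sum>xs\<in>{xs. set xs \<subseteq> A \<and> length xs = Suc n}. prod_list (map f xs))
      = (\<Sum>z\<in>A \<times> {xs. set xs \<subseteq> A \<and> length xs = n}. prod_list (map f ((\<lambda>(x,xs). x # xs) z)))"
    unfolding lists_set_Suc by (rule sum.reindex[OF inj, unfolded comp_def])
  also have "\<dots> = (\<Sum>x\<in>A. \<Sum>xs\<in>{xs. set xs \<subseteq> A \<and> length xs = n}. f x * prod_list (map f xs))"
    by (simp add: sum.cartesian_product split_def)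
  also have "\<dots> = sum f A * (sum f A)^n"
    by (simp add: sum_distrib_left[symmetric] sum_distrib_right Suc.IH)
  finally show ?case by simp
qed

lemma sum_list_pos_nat: "xs \<noteq> [] \<Longrightarrow> \<forall>r\<in>set xs. 0 < r \<Longrightarrow> 0 < sum_list (xs::nat list)"
  by (cases xs) auto

lemma lsum_strict:
  assumes pos: "\<forall>r\<in>set rs. 0 < r" and "s < s'" and "s' \<le> length rs"
  shows "lsum rs s < lsum rs s'"
proof -
  have "take s' rs = take s rs @ drop s (take s' rs)"
    using assms by (metis append_take_drop_id take_take min_absorb1 less_imp_le)
  hence "lsum rs s' = lsum rs s + sum_list (drop s (take s' rs))"
    unfolding lsum_def by (metis sum_list_append)
  moreover have "drop s (take s' rs) \<noteq> []" using assms by simp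
  moreover have "\<forall>r\<in>set (drop s (take s' rs)). 0 < r" using pos
    by (meson in_set_dropD in_set_takeD)
  ultimately show ?thesis using sum_list_pos_nat by fastforce
qed

lemma lsum_full: "lsum rs (length rs) = sum_list rs"
  unfolding lsum_def by simp

lemma lsum_0: "lsum rs 0 = 0"
  unfolding lsum_def by simp

lemma weight_prod:
  fixes K :: real
  assumes "\<forall>r\<in>set rs. 0 < r" and K: "K > 0"
  shows "prod_list (map (\<lambda>r. 2^(r-1) / (fact r * K^r)) rs) * K^(sum_list rs)
       = 2^(sum_list rs - length rs) / real (\<Prod>r\<leftarrow>rs. fact r) \<and> length rs \<le> sum_list rs"
  using assms(1)
proof (induction rs)
  case Nil
  then show ?case by simp
next
  case (Cons r rs)
  have r: "0 < r" and IH: "prod_list (map (\<lambda>r. 2^(r-1) / (fact r * K^r)) rs) * K^(sum_list rs)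
       = 2^(sum_list rs - length rs) / real (\<Prod>r\<leftarrow>rs. fact r)" and le: "length rs \<le> sum_list rs"
    using Cons by auto
  have e: "sum_list (r # rs) - length (r # rs) = (r - 1) + (sum_list rs - length rs)"
    using r le by simp
  have "prod_list (map (\<lambda>r. 2^(r-1) / (fact r * K^r)) (r#rs)) * K^(sum_list (r#rs))
     = (2^(r-1) / fact r) * (prod_list (map (\<lambda>r. 2^(r-1) / (fact r * K^r)) rs) * K^(sum_list rs))"
    using K by (simp add: power_add field_simps)
  also have "\<dots> = 2^(sum_list (r # rs) - length (r # rs)) / real (\<Prod>r\<leftarrow>(r#rs). fact r)"
    unfolding IH e by (simp add: power_add of_nat_mult)
  finally show ?case using r le by simp
qed

lemma fact_ge3: "2 \<le> r \<Longrightarrow> (2::real) * 3^(r-2) \<le> fact r"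
proof (induction r rule: dec_induct)
  case base then show ?case by simp
next
  case (step n)
  have "(2::real) * 3^(Suc n - 2) = 3 * (2 * 3^(n-2))"
  proof -
    have "Suc n - 2 = Suc (n-2)" using step(1) by simp
    then show ?thesis by simp
  qed
  also have "\<dots> \<le> real (Suc n) * fact n"
    using step by (intro mult_mono) auto
  finally show ?case by simp
qed



definition vw :: "nat \<Rightarrow> real" where "vw r = 2^(r-1) / (fact r * (19/10)^r)"

lemma vw_nonneg: "0 \<le> vw r" unfolding vw_def by simp

lemma vw_le: assumes "2 \<le> r" shows "vw r \<le> (20/57)^(r-2) / (19/10)^2"
proof -
  have f: "(2::real) * 3^(r-2) \<le> fact r" using fact_ge3[OF assms] .
  have "vw r \<le> 2^(r-1) / (2 * 3^(r-2) * (19/10)^r)"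
    unfolding vw_def by (intro divide_left_mono mult_right_mono f) auto
  also have "\<dots> = (20/57)^(r-2) / (19/10)^2"
  proof -
    obtain k where k: "r = k + 2" using assms by (metis add.commute le_iff_add)
    have e: "(2::real)^k * (10^k*57^k) = 3^k*(20^k*19^k)" by (simp flip: power_mult_distrib)
    show ?thesis unfolding k by (simp add: power_add power_divide field_simps e)
  qed
  finally show ?thesis .
qed

lemma vw_sum_aux: "1 \<le> m \<Longrightarrow> (\<Sum>r=1..m. vw r) \<le> 10/19 + (100/361) * (1 - (20/57)^(m-1)) / (1 - 20/57)"
proof (induction m rule: dec_induct)
  case base then show ?case by (simp add: vw_def)
next
  case (step n)
  have "(\<Sum>r=1..Suc n. vw r) = (\<Sum>r=1..n. vw r) + vw (Suc n)" using step(1) by simp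
  also have "\<dots> \<le> 10/19 + (100/361) * (1 - (20/57)^(n-1)) / (1 - 20/57) + (20/57)^(n-1) * (100/361)"
    using step vw_le[of "Suc n"] by (intro add_mono) (auto simp: power_divide)
  also have "\<dots> = 10/19 + (100/361) * (1 - (20/57)^(Suc n-1)) / (1 - 20/57)"
  proof -
    obtain k where k: "n = Suc k" using step(1) by (cases n) auto
    show ?thesis unfolding k by (simp add: field_simps)
  qed
  finally show ?case .
qed

lemma vw_sum: "(\<Sum>r=1..m. vw r) \<le> 24/25"
proof (cases "m = 0")
  case True then show ?thesis by simp
next
  case False
  then have "(\<Sum>r=1..m. vw r) \<le> 10/19 + (100/361) * (1 - (20/57)^(m-1)) / (1 - 20/57)"
    by (intro vw_sum_aux) auto
  also have "\<dots> \<le> 10/19 + (100/361) * 1 / (1 - 20/57)"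
    by (intro add_left_mono divide_right_mono mult_left_mono) auto
  also have "\<dots> \<le> 24/25" by simp
  finally show ?thesis .
qed



lemma term_bound:
  fixes A :: "nat \<Rightarrow> complex" and a0 :: complex
  assumes nA: "\<And>l. cmod (A l) = 1" and na0: "cmod a0 = 1"
    and neq: "\<And>l. l \<in> {1..\<alpha>-1} \<Longrightarrow> A l \<noteq> a0"
    and n: "1 \<le> n" and rs: "rs \<in> Omega n \<alpha>"
  shows "cmod ((1 / of_nat (\<Prod>r\<leftarrow>rs. fact r)) * ((a0 * (\<Prod>s=1..n-1. A (lsum rs s))) /
            (\<Prod>s=1..n-1. A (lsum rs s) - a0)))
         * (\<Prod>l\<in>{1..\<alpha>-1}. cmod (A l - a0))
         \<le> 2^(\<alpha>-n) / real (\<Prod>r\<leftarrow>rs. fact r)"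
proof -
  define d where "d l = cmod (A l - a0)" for l
  define F where "F = real (\<Prod>r\<leftarrow>rs. fact r)"
  have len: "length rs = n" and pos: "\<forall>r\<in>set rs. 0 < r" and sum: "sum_list rs = \<alpha>"
    using rs unfolding Omega_def by auto
  define L where "L = (\<lambda>s. lsum rs s) ` {1..n-1}"
  have inj: "inj_on (\<lambda>s. lsum rs s) {1..n-1}"
  proof (rule inj_onI)
    fix s s' assume s: "s \<in> {1..n-1}" and s': "s' \<in> {1..n-1}" and e: "lsum rs s = lsum rs s'"
    show "s = s'"
    proof (rule ccontr)
      assume "s \<noteq> s'"
      then consider "s < s'" | "s' < s" by linarith
      moreover have "s \<le> length rs" "s' \<le> length rs" using s s' len by auto
      ultimately show False
        using lsum_strict[OF pos, of s s'] lsum_strict[OF pos, of s' s] e by (cases; auto)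
    qed
  qed
  have Lsub: "L \<subseteq> {1..\<alpha>-1}"
  proof
    fix l assume "l \<in> L"
    then obtain s where s: "s \<in> {1..n-1}" and l: "l = lsum rs s" unfolding L_def by auto
    have "lsum rs 0 < lsum rs s" using lsum_strict[OF pos, of 0 s] s len by auto
    moreover have "lsum rs s < lsum rs n" using lsum_strict[OF pos, of s n] s len n by auto
    ultimately show "l \<in> {1..\<alpha>-1}" using l lsum_0[of rs] lsum_full[of rs] len sum by auto
  qed
  have cardL: "card L = n - 1" unfolding L_def using inj by (simp add: card_image)
  have cardR: "card ({1..\<alpha>-1} - L) = \<alpha> - n"
    using Lsub cardL n by (simp add: card_Diff_subset finite_subset)
  have dpos: "\<And>l. l \<in> {1..\<alpha>-1} \<Longrightarrow> 0 < d l" unfolding d_def using neq by auto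
  have dle: "\<And>l. d l \<le> 2"
  proof -
    fix l have "d l \<le> cmod (A l) + cmod a0" unfolding d_def by (rule norm_triangle_ineq4)
    then show "d l \<le> 2" using nA na0 by simp
  qed
  have PL: "(\<Prod>s=1..n-1. cmod (A (lsum rs s) - a0)) = prod d L"
    unfolding L_def d_def by (subst prod.reindex[OF inj]) simp
  have PLpos: "0 < prod d L" using Lsub dpos by (intro prod_pos) auto
  have split: "(\<Prod>l\<in>{1..\<alpha>-1}. cmod (A l - a0)) = prod d ({1..\<alpha>-1} - L) * prod d L"
    unfolding d_def[symmetric] by (rule prod.subset_diff[OF Lsub]) simp
  have Rle: "prod d ({1..\<alpha>-1} - L) \<le> 2^(\<alpha>-n)"
    using cardR by (intro prod_le_power) (auto simp: d_def dle[unfolded d_def])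
  have "0 < prod_list (map fact rs :: nat list)" by (induction rs) auto
  then have Fpos: "F > 0" unfolding F_def by simp
  have nt: "cmod ((1 / of_nat (\<Prod>r\<leftarrow>rs. fact r)) * ((a0 * (\<Prod>s=1..n-1. A (lsum rs s))) /
            (\<Prod>s=1..n-1. A (lsum rs s) - a0))) = (1/F) / prod d L"
    unfolding F_def PL[symmetric] by (simp add: norm_mult norm_divide prod_norm[symmetric] nA na0 norm_of_nat)
  show ?thesis unfolding nt split F_def[symmetric]
    using PLpos Fpos Rle by (simp add: field_simps)
qed



lemma cmod_cnj_shift: "cmod a = 1 \<Longrightarrow> cmod (x * cnj a - 1) = cmod (x - a)"
proof -
  assume a: "cmod a = 1"
  have "a * cnj a = 1" using a by (metis complex_norm_square mult.commute of_real_1 power_one)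
  hence "x * cnj a - 1 = (x - a) * cnj a" by (simp add: algebra_simps)
  thus ?thesis using a by (simp add: norm_mult)
qed

lemma Omega_sub: "Omega n \<alpha> \<subseteq> {xs. set xs \<subseteq> {1..\<alpha>} \<and> length xs = n}"
  unfolding Omega_def by (auto simp: Suc_le_eq member_le_sum_list)

lemma sum_Omega_vw: "(\<Sum>rs\<in>Omega n \<alpha>. prod_list (map vw rs)) \<le> (24/25)^n"
proof -
  have fin: "finite {xs. set xs \<subseteq> {1..\<alpha>} \<and> length xs = n}" by (rule finite_lists_length_eq) simp
  have "(\<Sum>rs\<in>Omega n \<alpha>. prod_list (map vw rs)) \<le> (\<Sum>rs\<in>{xs. set xs \<subseteq> {1..\<alpha>} \<and> length xs = n}. prod_list (map vw rs))"
    by (intro sum_mono2[OF fin Omega_sub]) (auto intro!: prod_list_nonneg simp: vw_nonneg)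
  also have "\<dots> = (\<Sum>r=1..\<alpha>. vw r)^n" by (rule sum_lists_power) simp
  also have "\<dots> \<le> (24/25)^n" by (intro power_mono vw_sum sum_nonneg vw_nonneg)
  finally show ?thesis .
qed

lemma geo25: "(\<Sum>n=1..m. (24/25::real)^n) \<le> 25"
proof -
  have "(\<Sum>n=1..m. (24/25::real)^n) \<le> (\<Sum>n<Suc m. (24/25::real)^n)"
    by (intro sum_mono2) auto
  also have "\<dots> = (1 - (24/25)^Suc m) / (1 - 24/25)" by (simp add: sum_gp_strict)
  also have "\<dots> \<le> 25" by simp
  finally show ?thesis .
qed

theorem lemma3:
  shows "\<exists>C>0. \<exists>\<gamma>>0. \<exists>Q::nat. \<forall>(q::nat) (p::int) (j::nat).
     prime q \<and> 2 < q \<and> Q \<le> q \<and> \<not> (int q dvd p) \<and> 1 \<le> j \<and> 4 * j < q + 2 \<longrightarrow>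
     cmod (s_coef p q j) \<le>
       C * sqrt (real q) * exp (- \<gamma> * real q) *
       (\<Prod>l=1..alpha q j - 1. 1 / cmod (aseq p q (int (j + l)) * cnj (aseq p q (int j)) - 1))"
proof (intro exI conjI allI impI)
  define \<gamma> :: real where "\<gamma> = ln (20/19) / 2"
  show "(25::real) > 0" by simp
  show "\<gamma> > 0" unfolding \<gamma>_def by simp
  fix q :: nat and p :: int and j :: nat
  assume H: "prime q \<and> 2 < q \<and> 0 \<le> q \<and> \<not> (int q dvd p) \<and> 1 \<le> j \<and> 4 * j < q + 2"
  hence q: "prime q" and q2: "2 < q" and pq: "\<not> int q dvd p" and j: "1 \<le> j" and jq: "4*j < q+2" by auto
  define \<alpha> where "\<alpha> = alpha q j"
  have \<alpha>: "\<alpha> = q + 1 - 2*j" unfolding \<alpha>_def alpha_def by simp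
  have \<alpha>q: "q \<le> 2 * \<alpha>" using \<alpha> jq by simp
  define A where "A l = aseq p q (int (j + l))" for l
  define a0 where "a0 = aseq p q (int j)"
  define P where "P = (\<Prod>l\<in>{1..\<alpha>-1}. cmod (A l - a0))"
  have neq: "\<And>l. l \<in> {1..\<alpha>-1} \<Longrightarrow> A l \<noteq> a0"
    unfolding A_def a0_def using q pq j \<alpha> jq by (intro aseq_neq) auto
  have Ppos: "P > 0" unfolding P_def using neq by (intro prod_pos) auto
  define T where "T n rs = (1 / of_nat (\<Prod>r\<leftarrow>rs. fact r)) * ((a0 * (\<Prod>s=1..n-1. A (lsum rs s))) /
            (\<Prod>s=1..n-1. A (lsum rs s) - a0))" for n rs
  have s_eq: "s_coef p q j = - \<i> * (1 / 2 ^ \<alpha>) * (\<Sum>n=1..\<alpha>. (-1) ^ (n + j) * (\<Sum>rs\<in>Omega n \<alpha>. T n rs))"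
    unfolding s_coef_def Let_def T_def A_def a0_def \<alpha>_def by simp
  have Tb: "cmod (T n rs) \<le> (19/10)^\<alpha> * prod_list (map vw rs) / P" if n: "1 \<le> n" and rs: "rs \<in> Omega n \<alpha>" for n rs
  proof -
    have tb: "cmod (T n rs) * P \<le> 2^(\<alpha>-n) / real (\<Prod>r\<leftarrow>rs. fact r)"
      unfolding T_def P_def
      by (rule term_bound[OF _ _ neq n rs]) (auto simp: A_def a0_def)
    have len: "length rs = n" and pos: "\<forall>r\<in>set rs. 0 < r" and sum: "sum_list rs = \<alpha>"
      using rs unfolding Omega_def by auto
    have "2^(\<alpha>-n) / real (\<Prod>r\<leftarrow>rs. fact r) = prod_list (map vw rs) * (19/10)^\<alpha>"
      using weight_prod[OF pos, of "19/10"] len sum unfolding vw_def by simp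
    with tb Ppos show ?thesis by (simp add: field_simps)
  qed
  have "cmod (s_coef p q j) = (1 / 2 ^ \<alpha>) * cmod (\<Sum>n=1..\<alpha>. (-1) ^ (n + j) * (\<Sum>rs\<in>Omega n \<alpha>. T n rs))"
    unfolding s_eq by (simp add: norm_mult norm_divide norm_power)
  also have "\<dots> \<le> (1 / 2 ^ \<alpha>) * (\<Sum>n=1..\<alpha>. (19/10)^\<alpha> * (24/25)^n / P)"
  proof (intro mult_left_mono)
    show "cmod (\<Sum>n=1..\<alpha>. (-1) ^ (n + j) * (\<Sum>rs\<in>Omega n \<alpha>. T n rs)) \<le> (\<Sum>n=1..\<alpha>. (19/10)^\<alpha> * (24/25)^n / P)"
    proof (rule order.trans[OF norm_sum], rule sum_mono)
      fix n assume n: "n \<in> {1..\<alpha>}"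
      have fin: "finite (Omega n \<alpha>)"
        by (rule finite_subset[OF Omega_sub finite_lists_length_eq]) simp
      have "cmod ((-1) ^ (n + j) * (\<Sum>rs\<in>Omega n \<alpha>. T n rs)) = cmod (\<Sum>rs\<in>Omega n \<alpha>. T n rs)"
        by (simp add: norm_mult norm_power)
      also have "\<dots> \<le> (\<Sum>rs\<in>Omega n \<alpha>. cmod (T n rs))" by (rule norm_sum)
      also have "\<dots> \<le> (\<Sum>rs\<in>Omega n \<alpha>. (19/10)^\<alpha> * prod_list (map vw rs) / P)"
        using n by (intro sum_mono Tb) auto
      also have "\<dots> = (19/10)^\<alpha> * (\<Sum>rs\<in>Omega n \<alpha>. prod_list (map vw rs)) / P"
        by (simp add: sum_distrib_left sum_divide_distrib)
      also have "\<dots> \<le> (19/10)^\<alpha> * (24/25)^n / P"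
        using Ppos by (intro divide_right_mono mult_left_mono sum_Omega_vw) auto
      finally show "cmod ((-1) ^ (n + j) * (\<Sum>rs\<in>Omega n \<alpha>. T n rs)) \<le> (19/10)^\<alpha> * (24/25)^n / P" .
    qed
  qed simp
  also have "\<dots> = (19/20)^\<alpha> * (\<Sum>n=1..\<alpha>. (24/25)^n) / P"
  proof -
    have "(19/20::real) = (1/2)*(19/10)" by simp
    hence e: "(1 / 2 ^ \<alpha>) * (19/10::real)^\<alpha> = (19/20)^\<alpha>"
      by (metis power_mult_distrib power_one_over)
    have "(\<Sum>n=1..\<alpha>. (19/10::real)^\<alpha> * (24/25)^n / P) = (19/10)^\<alpha> * (\<Sum>n=1..\<alpha>. (24/25)^n) / P"
      by (simp only: sum_divide_distrib[symmetric] sum_distrib_left[symmetric])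
    then show ?thesis using e by (metis (no_types, lifting) mult.assoc times_divide_eq_right)
  qed
  also have "\<dots> \<le> (19/20)^\<alpha> * 25 / P"
    using Ppos by (intro divide_right_mono mult_left_mono geo25) auto
  also have "\<dots> \<le> 25 * sqrt (real q) * exp (- \<gamma> * real q) / P"
  proof -
    have "(19/20::real)^\<alpha> = exp (real \<alpha> * ln (19/20))"
      by (simp add: exp_of_nat_mult)
    also have "\<dots> \<le> exp (- \<gamma> * real q)"
    proof -
      have l: "ln (19/20::real) = - ln (20/19)" by (simp add: ln_div)
      have "ln (20/19::real) > 0" by simp
      then have "real q * ln (20/19) \<le> 2 * real \<alpha> * ln (20/19)"
        using \<alpha>q by (intro mult_right_mono) auto
      then show ?thesis unfolding \<gamma>_def l by simp
    qed
    finally have e: "(19/20::real)^\<alpha> \<le> exp (- \<gamma> * real q)" .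
    have sq: "1 \<le> sqrt (real q)" using q2 by simp
    have "(19/20::real)^\<alpha> * 25 \<le> 25 * sqrt (real q) * exp (- \<gamma> * real q)"
    proof -
      have "(19/20::real)^\<alpha> * 25 \<le> 25 * 1 * exp (- \<gamma> * real q)" using e by simp
      also have "\<dots> \<le> 25 * sqrt (real q) * exp (- \<gamma> * real q)"
        using sq by (intro mult_right_mono mult_left_mono) auto
      finally show ?thesis .
    qed
    then show ?thesis using Ppos by (intro divide_right_mono) auto
  qed
  also have "\<dots> = 25 * sqrt (real q) * exp (- \<gamma> * real q) *
       (\<Prod>l=1..alpha q j - 1. 1 / cmod (aseq p q (int (j + l)) * cnj (aseq p q (int j)) - 1))"
  proof -
    have "(\<Prod>l=1..alpha q j - 1. 1 / cmod (aseq p q (int (j + l)) * cnj (aseq p q (int j)) - 1)) = 1 / P"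
      unfolding P_def A_def a0_def \<alpha>_def
      by (simp add: cmod_cnj_shift prod_dividef)
    then show ?thesis by simp
  qed
  finally show "cmod (s_coef p q j) \<le> 25 * sqrt (real q) * exp (- \<gamma> * real q) *
       (\<Prod>l=1..alpha q j - 1. 1 / cmod (aseq p q (int (j + l)) * cnj (aseq p q (int j)) - 1))" .
qed


end
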